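(* Let $\nu\in(0,1]$, $\varrho,c_l,\alpha,\delta>0$, $x\in K_\nu^\varrho$, $g^\delta\in\mathbb Y$ with $\|g^\delta-Ax\|_{\mathbb Y}\le\delta$, and $\hat x_\alpha\in R_\alpha(g^\delta)$. If $c_l\varrho^{-1/\nu}\delta^{1/\nu}\le\alpha$, then $\varrho_\nu(\hat x_\alpha)\le(2+c_l^{-\nu})\varrho$.
   Context: Standing setting: $\mathbb X$ real Banach space, $\tau$ a topology with $(\mathbb X,\tau)$ locally convex Hausdorff; $\mathcal R:\mathbb X\to(-\infty,\infty]$ proper convex with $\tau$-compact sublevel sets; $\mathbb Y$ real Hilbert space; $A:\mathbb X\to\mathbb Y$ linear, $\tau$-to-weak continuous. $T_\alpha(x,g):=\frac1{2\alpha}\|g-Ax\|_{\mathbb Y}^2+\mathcal R(x)$, $R_\alpha(g):=\operatorname{argmin}_{x\in\mathrm{dom}(\mathcal R)}T_\alpha(x,g)$. For $\nu\ge0$, $\varrho_\nu(x):=\sup\{\alpha^{-\nu}\|Ax-Ax_\alpha\|_{\mathbb Y}:\alpha>0,x_\alpha\in R_\alpha(Ax)\}$ and $K_\nu^\varrho:=\{x\in\mathbb X:\varrho_\nu(x)\le\varrho\}$. *)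

theory Defs
  imports "HOL-Analysis.Analysis"
begin

definition locally_convex_hausdorff :: "'a::real_vector topology \<Rightarrow> bool" where
  "locally_convex_hausdorff \<tau> \<longleftrightarrow>
     topspace \<tau> = UNIV \<and> Hausdorff_space \<tau> \<and>
     continuous_map (prod_topology \<tau> \<tau>) \<tau> (\<lambda>(x, y). x + y) \<and>
     continuous_map (prod_topology euclideanreal \<tau>) \<tau> (\<lambda>(c, x). c *\<^sub>R x) \<and>
     (\<forall>U x. openin \<tau> U \<and> x \<in> U \<longrightarrow> (\<exists>V. openin \<tau> V \<and> convex V \<and> x \<in> V \<and> V \<subseteq> U))"

definition weak_topology :: "'b::real_inner topology" where
  "weak_topology = topology_generated_by {{y. y \<bullet> z \<in> U} | z U. open U}"

definition proper_convex :: "('a::real_vector \<Rightarrow> ereal) \<Rightarrow> bool" where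
  "proper_convex R \<longleftrightarrow> (\<forall>x. R x \<noteq> -\<infinity>) \<and> (\<exists>x. R x \<noteq> \<infinity>) \<and>
     (\<forall>x y t. 0 < t \<and> t < 1 \<longrightarrow>
        R (t *\<^sub>R x + (1 - t) *\<^sub>R y) \<le> ereal t * R x + ereal (1 - t) * R y)"

definition domR :: "('a \<Rightarrow> ereal) \<Rightarrow> 'a set" where
  "domR R = {x. R x \<noteq> \<infinity>}"

definition Tik :: "('a \<Rightarrow> 'b::real_normed_vector) \<Rightarrow> ('a \<Rightarrow> ereal) \<Rightarrow> real \<Rightarrow> 'a \<Rightarrow> 'b \<Rightarrow> ereal" where
  "Tik A R \<alpha> x g = ereal ((norm (g - A x))\<^sup>2 / (2 * \<alpha>)) + R x"

definition Rmin :: "('a \<Rightarrow> 'b::real_normed_vector) \<Rightarrow> ('a \<Rightarrow> ereal) \<Rightarrow> real \<Rightarrow> 'b \<Rightarrow> 'a set" where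
  "Rmin A R \<alpha> g = {x \<in> domR R. \<forall>y \<in> domR R. Tik A R \<alpha> x g \<le> Tik A R \<alpha> y g}"

definition varrho :: "('a \<Rightarrow> 'b::real_normed_vector) \<Rightarrow> ('a \<Rightarrow> ereal) \<Rightarrow> real \<Rightarrow> 'a \<Rightarrow> ereal" where
  "varrho A R \<nu> x = Sup {ereal (\<alpha> powr (-\<nu>) * norm (A x - A xa)) | \<alpha> xa. \<alpha> > 0 \<and> xa \<in> Rmin A R \<alpha> (A x)}"

definition Kset :: "('a \<Rightarrow> 'b::real_normed_vector) \<Rightarrow> ('a \<Rightarrow> ereal) \<Rightarrow> real \<Rightarrow> real \<Rightarrow> 'a set" where
  "Kset A R \<nu> \<rho> = {x. varrho A R \<nu> x \<le> ereal \<rho>}"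

end

theory Submission
  imports Defs
begin

lemma weak_topspace: "topspace (weak_topology::'b::real_inner topology) = UNIV"
proof -
  have "UNIV \<in> {{y::'b. y \<bullet> z \<in> U} | z U. open U}"
    by (rule CollectI, rule exI[of _ 0], rule exI[of _ UNIV]) auto
  then show ?thesis unfolding weak_topology_def by auto
qed

lemma weak_open_norm:
  "openin (weak_topology::'b::real_inner topology) {y. t < norm (y - g)}"
proof (subst openin_subopen, intro ballI)
  fix y :: 'b assume y: "y \<in> {y. t < norm (y - g)}"
  show "\<exists>T. openin weak_topology T \<and> y \<in> T \<and> T \<subseteq> {y. t < norm (y - g)}"
  proof (cases "t < 0")
    case True
    have "openin (weak_topology::'b topology) UNIV" using openin_topspace[of "weak_topology::'b topology"]
      by (simp only: weak_topspace)
    moreover have "UNIV \<subseteq> {y. t < norm (y - g)}" using True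
      by (auto intro: less_le_trans[of t 0])
    ultimately show ?thesis by blast
  next
    case False
    define z where "z = y - g"
    have zpos: "0 < norm z" using y False unfolding z_def by auto
    define T where "T = {w::'b. w \<bullet> z \<in> {g \<bullet> z + t * norm z <..}}"
    have "T \<in> {{y::'b. y \<bullet> z \<in> U} | z U. open U}"
      unfolding T_def by (intro CollectI exI[of _ z] exI[of _ "{g \<bullet> z + t * norm z <..}"]) simp
    then have "openin weak_topology T" unfolding weak_topology_def
      by (rule topology_generated_by_Basis)
    moreover have "y \<in> T"
    proof -
      have "y \<bullet> z - g \<bullet> z = norm z * norm z"
        by (metis inner_diff_left power2_norm_eq_inner power2_eq_square z_def)
      moreover have "t * norm z < norm z * norm z" using y zpos z_def by simp
      ultimately show ?thesis unfolding T_def by simp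
    qed
    moreover have "T \<subseteq> {y. t < norm (y - g)}"
    proof
      fix w assume "w \<in> T"
      then have "t * norm z < (w - g) \<bullet> z" unfolding T_def by (simp add: inner_diff_left)
      also have "\<dots> \<le> norm (w - g) * norm z" by (rule order_trans[OF _ Cauchy_Schwarz_ineq2]) simp
      finally show "w \<in> {y. t < norm (y - g)}" using zpos by simp
    qed
    ultimately show ?thesis by blast
  qed
qed

lemma q_open:
  fixes A :: "'a \<Rightarrow> 'b::real_inner"
  assumes top: "topspace \<tau> = UNIV" and cont: "continuous_map \<tau> weak_topology A" and al: "0 < \<alpha>"
  shows "openin \<tau> {z. s < (norm (g - A z))\<^sup>2 / (2 * \<alpha>)}"
proof (cases "s < 0")
  case True
  then have "{z. s < (norm (g - A z))\<^sup>2 / (2 * \<alpha>)} = topspace \<tau>"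
    using top al by (auto intro: less_le_trans[of s 0])
  then show ?thesis by simp
next
  case False
  have "openin \<tau> {x \<in> topspace \<tau>. A x \<in> {y. sqrt (2 * \<alpha> * s) < norm (y - g)}}"
    by (rule openin_continuous_map_preimage[OF cont weak_open_norm])
  moreover have "{x \<in> topspace \<tau>. A x \<in> {y. sqrt (2 * \<alpha> * s) < norm (y - g)}}
      = {z. s < (norm (g - A z))\<^sup>2 / (2 * \<alpha>)}"
  proof -
    have "sqrt (2 * \<alpha> * s) < n \<longleftrightarrow> s < n\<^sup>2 / (2 * \<alpha>)" if "0 \<le> n" for n :: real
    proof -
      have nn: "sqrt (n\<^sup>2) = n" using that by simp
      have "sqrt (2 * \<alpha> * s) < n \<longleftrightarrow> sqrt (2 * \<alpha> * s) < sqrt (n\<^sup>2)" by (simp only: nn)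
      also have "\<dots> \<longleftrightarrow> 2 * \<alpha> * s < n\<^sup>2" by (rule real_sqrt_less_iff)
      also have "\<dots> \<longleftrightarrow> s < n\<^sup>2 / (2 * \<alpha>)" using al by (simp add: field_simps)
      finally show ?thesis .
    qed
    then show ?thesis using top by (auto simp: norm_minus_commute)
  qed
  ultimately show ?thesis by simp
qed

lemma R_open:
  assumes H: "Hausdorff_space \<tau>" and top: "topspace \<tau> = UNIV"
    and comp: "\<forall>c::real. compactin \<tau> {z. R z \<le> ereal c}"
  shows "openin \<tau> {z. ereal s < R z}"
proof -
  have "closedin \<tau> {z. R z \<le> ereal s}" using compactin_imp_closedin[OF H] comp by blast
  then have "openin \<tau> (UNIV - {z. R z \<le> ereal s})" using top by (simp add: closedin_def)
  moreover have "UNIV - {z. R z \<le> ereal s} = {z. ereal s < R z}" by auto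
  ultimately show ?thesis by simp
qed

lemma aux_lin: "(a0::real) - e < a1 \<Longrightarrow> r - e < r' \<Longrightarrow> e = (a0 + r - t) / 2 \<Longrightarrow> t < a1 + r'"
  by argo

lemma tik_closed:
  fixes A :: "'a \<Rightarrow> 'b::real_inner"
  assumes H: "Hausdorff_space \<tau>" and top: "topspace \<tau> = UNIV"
    and comp: "\<forall>c::real. compactin \<tau> {z. R z \<le> ereal c}"
    and cont: "continuous_map \<tau> weak_topology A" and al: "0 < \<alpha>"
  shows "closedin \<tau> {z. Tik A R \<alpha> z g \<le> ereal t}"
proof -
  let ?q = "\<lambda>z. (norm (g - A z))\<^sup>2 / (2 * \<alpha>)"
  have "openin \<tau> {z. ereal t < ereal (?q z) + R z}"
  proof (subst openin_subopen, intro ballI)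
    fix z0 assume z0: "z0 \<in> {z. ereal t < ereal (?q z) + R z}"
    show "\<exists>T. openin \<tau> T \<and> z0 \<in> T \<and> T \<subseteq> {z. ereal t < ereal (?q z) + R z}"
    proof (cases "R z0")
      case (real r)
      define e where "e = (?q z0 + r - t) / 2"
      have e: "0 < e" using z0 real unfolding e_def by simp
      define T where "T = {z. ?q z0 - e < ?q z} \<inter> {z. ereal (r - e) < R z}"
      have "openin \<tau> T" unfolding T_def
        by (intro openin_Int q_open[OF top cont al] R_open[OF H top comp])
      moreover have "z0 \<in> T" unfolding T_def using e real by simp
      moreover have "T \<subseteq> {z. ereal t < ereal (?q z) + R z}"
      proof
        fix z assume "z \<in> T"
        then have a: "?q z0 - e < ?q z" and b: "ereal (r - e) < R z" unfolding T_def by auto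
        show "z \<in> {z. ereal t < ereal (?q z) + R z}"
        proof (cases "R z")
          case (real r')
          have b': "r - e < r'" using b real by simp
          have "t < ?q z + r'" using aux_lin[OF a b' e_def] .
          then show ?thesis using real by simp
        qed (use b in auto)
      qed
      ultimately show ?thesis by blast
    next
      case PInf
      define T where "T = {z. ereal t < R z}"
      have "openin \<tau> T" unfolding T_def by (rule R_open[OF H top comp])
      moreover have "z0 \<in> T" unfolding T_def using PInf by simp
      moreover have "T \<subseteq> {z. ereal t < ereal (?q z) + R z}"
      proof
        fix z assume "z \<in> T"
        then have b: "ereal t < R z" unfolding T_def by auto
        have q0: "0 \<le> ?q z" using al by simp
        show "z \<in> {z. ereal t < ereal (?q z) + R z}"
        proof (cases "R z")
          case (real r')
          then show ?thesis using b q0 by simp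
        qed (use b in auto)
      qed
      ultimately show ?thesis by blast
    next
      case MInf
      then show ?thesis using z0 by simp
    qed
  qed
  moreover have "topspace \<tau> - {z. Tik A R \<alpha> z g \<le> ereal t} = {z. ereal t < ereal (?q z) + R z}"
    using top by (auto simp: Tik_def)
  ultimately have "openin \<tau> (topspace \<tau> - {z. Tik A R \<alpha> z g \<le> ereal t})" by simp
  then show ?thesis using top by (simp add: closedin_def)
qed

lemma exists_min:
  fixes A :: "'a::real_vector \<Rightarrow> 'b::real_inner"
  assumes H: "Hausdorff_space \<tau>" and top: "topspace \<tau> = UNIV"
    and comp: "\<forall>c::real. compactin \<tau> {z. R z \<le> ereal c}"
    and cont: "continuous_map \<tau> weak_topology A" and al: "0 < \<alpha>"
    and pc: "proper_convex R"
  shows "\<exists>x. x \<in> Rmin A R \<alpha> g"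
proof -
  let ?f = "\<lambda>z. Tik A R \<alpha> z g"
  let ?q = "\<lambda>z. (norm (g - A z))\<^sup>2 / (2 * \<alpha>)"
  obtain x0 where "R x0 \<noteq> \<infinity>" using pc unfolding proper_convex_def by blast
  moreover have "R x0 \<noteq> -\<infinity>" using pc unfolding proper_convex_def by blast
  ultimately obtain r0 where r0: "R x0 = ereal r0" by (cases "R x0") auto
  define c where "c = ?q x0 + r0"
  define L where "L = {z. ?f z \<le> ereal c}"
  have fx0: "?f x0 = ereal c" unfolding c_def Tik_def r0 by simp
  have x0L: "x0 \<in> L" unfolding L_def using fx0 by simp
  have Lcl: "closedin \<tau> L" unfolding L_def by (rule tik_closed[OF H top comp cont al])
  have LR: "L \<subseteq> {z. R z \<le> ereal c}"
  proof
    fix z assume "z \<in> L"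
    then have le: "ereal (?q z) + R z \<le> ereal c" unfolding L_def Tik_def by simp
    have q0: "0 \<le> ?q z" using al by simp
    show "z \<in> {z. R z \<le> ereal c}"
    proof (cases "R z")
      case (real r)
      then show ?thesis using le q0 by simp
    qed (use le in auto)
  qed
  have Lcomp: "compactin \<tau> L"
    using closed_compactin[OF _ LR Lcl] comp by blast
  define m where "m = Inf (?f ` L)"
  define U where "U = {{z. ?f z \<le> ereal s} | s. m < ereal s}"
  have Ucl: "\<forall>C\<in>U. closedin \<tau> C"
    unfolding U_def using tik_closed[OF H top comp cont al] by blast
  have Ufin: "\<forall>F. finite F \<and> F \<subseteq> U \<longrightarrow> L \<inter> \<Inter>F \<noteq> {}"
  proof (intro allI impI)
    fix F assume F: "finite F \<and> F \<subseteq> U"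
    show "L \<inter> \<Inter>F \<noteq> {}"
    proof (cases "F = {}")
      case True
      then show ?thesis using x0L by auto
    next
      case False
      have "\<forall>C\<in>F. \<exists>s. m < ereal s \<and> C = {z. ?f z \<le> ereal s}" using F unfolding U_def by blast
      then obtain sel where sel: "\<And>C. C \<in> F \<Longrightarrow> m < ereal (sel C) \<and> C = {z. ?f z \<le> ereal (sel C)}"
        by metis
      define s0 where "s0 = Min (sel ` F)"
      have "s0 \<in> sel ` F" unfolding s0_def using F False by (intro Min_in) auto
      then have "m < ereal s0" using sel by auto
      then obtain z where z: "z \<in> L" "?f z < ereal s0" unfolding m_def by (auto simp: Inf_less_iff)
      have "z \<in> C" if "C \<in> F" for C
      proof -
        have "s0 \<le> sel C" unfolding s0_def using F that by (intro Min_le) auto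
        then have "?f z \<le> ereal (sel C)" using z(2) by (meson le_ereal_le less_imp_le order_trans ereal_less_eq(3))
        then show ?thesis using sel[OF that] by auto
      qed
      then show ?thesis using z(1) by blast
    qed
  qed
  have "L \<inter> \<Inter>U \<noteq> {}"
    using Lcomp Ucl Ufin unfolding compactin_fip by blast
  then obtain z where zL: "z \<in> L" and zU: "z \<in> \<Inter>U" by blast
  have fzm: "?f z \<le> m"
  proof (rule ccontr)
    assume "\<not> ?f z \<le> m"
    then have "m < ?f z" by simp
    then obtain s where s: "m < ereal s" "ereal s < ?f z" using ereal_dense2 by blast
    then have "{w. ?f w \<le> ereal s} \<in> U" unfolding U_def by blast
    then have "?f z \<le> ereal s" using zU by blast
    then show False using s by simp
  qed
  have zdom: "z \<in> domR R"
  proof -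
    have "ereal (?q z) + R z \<le> ereal c" using zL unfolding L_def Tik_def by simp
    then show ?thesis unfolding domR_def by auto
  qed
  have "\<forall>y \<in> domR R. ?f z \<le> ?f y"
  proof
    fix y assume "y \<in> domR R"
    show "?f z \<le> ?f y"
    proof (cases "y \<in> L")
      case True
      then have "m \<le> ?f y" unfolding m_def by (intro INF_lower)
      then show ?thesis using fzm by simp
    next
      case False
      then have "ereal c < ?f y" unfolding L_def by simp
      moreover have "?f z \<le> ereal c" using zL unfolding L_def by simp
      ultimately show ?thesis by simp
    qed
  qed
  then show ?thesis using zdom unfolding Rmin_def by blast
qed

lemma lim_aux:
  fixes a b c :: real
  assumes "\<And>t. 0 < t \<Longrightarrow> t < 1 \<Longrightarrow> a \<le> t * b + c" and "0 \<le> b"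
  shows "a \<le> c"
proof (rule ccontr)
  assume "\<not> a \<le> c"
  then have ac: "0 < a - c" by simp
  define t where "t = min (1/2) ((a - c) / (2 * (b + 1)))"
  have t0: "0 < t" unfolding t_def using ac assms(2) by simp
  have t1: "t < 1" unfolding t_def by simp
  have "t * b \<le> (a - c) / (2 * (b + 1)) * b" unfolding t_def using assms(2)
    by (intro mult_right_mono) auto
  also have "\<dots> < a - c"
  proof -
    have "(a - c) * b < (a - c) * (2 * (b + 1))" using ac assms(2) by (intro mult_strict_left_mono) auto
    then show ?thesis using assms(2) by (simp add: field_simps)
  qed
  finally show False using assms(1)[OF t0 t1] by simp
qed

lemma alg_aux:
  fixes EE EW WW r1 rz ry t \<alpha> :: real
  assumes al: "0 < \<alpha>" and t: "0 < t"
    and H: "EE / (2 * \<alpha>) + r1 \<le> (EE - 2 * t * EW + t\<^sup>2 * WW) / (2 * \<alpha>) + rz"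
    and rz: "rz \<le> t * ry + (1 - t) * r1"
  shows "EW \<le> t * (WW / 2) + \<alpha> * (ry - r1)"
proof -
  have "EE + 2 * \<alpha> * r1 \<le> EE - 2 * t * EW + t\<^sup>2 * WW + 2 * \<alpha> * rz"
  proof -
    have "(2 * \<alpha>) * (EE / (2 * \<alpha>) + r1) \<le> (2 * \<alpha>) * ((EE - 2 * t * EW + t\<^sup>2 * WW) / (2 * \<alpha>) + rz)"
      using H al by (intro mult_left_mono) auto
    moreover have c1: "(2 * \<alpha>) * (EE / (2 * \<alpha>)) = EE" using al by simp
    moreover have c2: "(2 * \<alpha>) * ((EE - 2 * t * EW + t\<^sup>2 * WW) / (2 * \<alpha>)) = EE - 2 * t * EW + t\<^sup>2 * WW"
      using al by simp
    ultimately show ?thesis by (simp only: distrib_left)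
  qed
  then have 1: "2 * t * EW \<le> t\<^sup>2 * WW + 2 * \<alpha> * (rz - r1)" by (simp add: algebra_simps)
  have "rz - r1 \<le> t * (ry - r1)" using rz by (simp add: algebra_simps)
  then have "2 * \<alpha> * (rz - r1) \<le> 2 * \<alpha> * (t * (ry - r1))" using al by (intro mult_left_mono) auto
  with 1 have "t * (2 * EW) \<le> t * (t * WW + 2 * \<alpha> * (ry - r1))"
    by (simp add: algebra_simps power2_eq_square)
  then have "2 * EW \<le> t * WW + 2 * \<alpha> * (ry - r1)" using t by simp
  then show ?thesis by (simp add: field_simps)
qed

lemma vi:
  fixes A :: "'a::real_vector \<Rightarrow> 'b::real_inner"
  assumes pc: "proper_convex R" and lin: "linear A" and al: "0 < \<alpha>"
    and x1: "x1 \<in> Rmin A R \<alpha> g" and y: "y \<in> domR R"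
  shows "(g - A x1) \<bullet> (A y - A x1) \<le> \<alpha> * (real_of_ereal (R y) - real_of_ereal (R x1))"
proof -
  have ninf: "\<And>z. R z \<noteq> -\<infinity>" using pc unfolding proper_convex_def by blast
  have x1d: "x1 \<in> domR R" and x1m: "\<And>z. z \<in> domR R \<Longrightarrow> Tik A R \<alpha> x1 g \<le> Tik A R \<alpha> z g"
    using x1 unfolding Rmin_def by auto
  obtain r1 where r1: "R x1 = ereal r1" using x1d ninf[of x1] unfolding domR_def by (cases "R x1") auto
  obtain ry where ry: "R y = ereal ry" using y ninf[of y] unfolding domR_def by (cases "R y") auto
  define e where "e = g - A x1"
  define w where "w = A y - A x1"
  have key: "e \<bullet> w \<le> t * ((w \<bullet> w) / 2) + \<alpha> * (ry - r1)" if t: "0 < t" "t < 1" for t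
  proof -
    define z where "z = t *\<^sub>R y + (1 - t) *\<^sub>R x1"
    have "R z \<le> ereal t * R y + ereal (1 - t) * R x1"
      using pc t unfolding proper_convex_def z_def by blast
    then have Rz: "R z \<le> ereal (t * ry + (1 - t) * r1)" by (simp add: r1 ry)
    then obtain rz where rz: "R z = ereal rz" using ninf[of z] by (cases "R z") auto
    have rzle: "rz \<le> t * ry + (1 - t) * r1" using Rz rz by simp
    have "z \<in> domR R" using rz unfolding domR_def by simp
    then have "Tik A R \<alpha> x1 g \<le> Tik A R \<alpha> z g" by (rule x1m)
    then have H0: "(norm (g - A x1))\<^sup>2 / (2 * \<alpha>) + r1 \<le> (norm (g - A z))\<^sup>2 / (2 * \<alpha>) + rz"
      unfolding Tik_def by (simp add: r1 rz)
    have Az: "A z = t *\<^sub>R A y + (1 - t) *\<^sub>R A x1"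
      unfolding z_def by (simp add: linear_add[OF lin] linear_scale[OF lin])
    have gz: "g - A z = e - t *\<^sub>R w" unfolding Az e_def w_def by (simp add: algebra_simps)
    have n1: "(norm (g - A x1))\<^sup>2 = e \<bullet> e" unfolding e_def by (simp add: power2_norm_eq_inner)
    have n2: "(norm (g - A z))\<^sup>2 = e \<bullet> e - 2 * t * (e \<bullet> w) + t\<^sup>2 * (w \<bullet> w)"
      unfolding gz power2_norm_eq_inner
      by (simp add: inner_diff_left inner_diff_right inner_commute power2_eq_square algebra_simps)
    show ?thesis using alg_aux[OF al t(1) H0[unfolded n1 n2] rzle] .
  qed
  have "e \<bullet> w \<le> \<alpha> * (ry - r1)"
    by (rule lim_aux[OF key]) auto
  then show ?thesis unfolding e_def w_def by (simp add: r1 ry)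
qed

lemma le_of_mul:
  fixes a b :: real
  assumes "a * a \<le> b * a" "0 \<le> a" "0 \<le> b"
  shows "a \<le> b"
proof (rule ccontr)
  assume "\<not> a \<le> b"
  then have ba: "b < a" by simp
  then have "0 < a" using assms(3) by linarith
  then have "b * a < a * a" using ba by (rule mult_strict_right_mono[rotated])
  then show False using assms(1) by linarith
qed

lemma firm_aux:
  fixes u h :: "'b::real_inner"
  assumes "u \<bullet> u \<le> h \<bullet> u"
  shows "norm (h - u) \<le> norm h" "norm u \<le> norm h"
proof -
  have "(norm (h - u))\<^sup>2 = h \<bullet> h - 2 * (h \<bullet> u) + u \<bullet> u"
    by (simp add: power2_norm_eq_inner inner_diff_left inner_diff_right inner_commute)
  also have "\<dots> \<le> h \<bullet> h" using assms inner_ge_zero[of u] by linarith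
  also have "\<dots> = (norm h)\<^sup>2" by (simp add: power2_norm_eq_inner)
  finally show "norm (h - u) \<le> norm h" by (simp add: power2_le_iff_abs_le)
  have "norm u * norm u \<le> norm h * norm u"
  proof -
    have "norm u * norm u = u \<bullet> u" by (simp add: power2_norm_eq_inner[symmetric] power2_eq_square)
    also have "\<dots> \<le> h \<bullet> u" by (rule assms)
    also have "\<dots> \<le> norm h * norm u" by (rule norm_cauchy_schwarz)
    finally show ?thesis .
  qed
  then show "norm u \<le> norm h" by (rule le_of_mul) auto
qed

lemma firm:
  fixes A :: "'a::real_vector \<Rightarrow> 'b::real_inner"
  assumes pc: "proper_convex R" and lin: "linear A" and al: "0 < \<alpha>"
    and x1: "x1 \<in> Rmin A R \<alpha> g1" and x2: "x2 \<in> Rmin A R \<alpha> g2"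
  shows "norm ((g1 - g2) - (A x1 - A x2)) \<le> norm (g1 - g2)" "norm (A x1 - A x2) \<le> norm (g1 - g2)"
proof -
  have d1: "x1 \<in> domR R" and d2: "x2 \<in> domR R" using x1 x2 unfolding Rmin_def by auto
  have i1: "(g1 - A x1) \<bullet> (A x2 - A x1) \<le> \<alpha> * (real_of_ereal (R x2) - real_of_ereal (R x1))"
    by (rule vi[OF pc lin al x1 d2])
  have i2: "(g2 - A x2) \<bullet> (A x1 - A x2) \<le> \<alpha> * (real_of_ereal (R x1) - real_of_ereal (R x2))"
    by (rule vi[OF pc lin al x2 d1])
  have "(g1 - A x1) \<bullet> (A x2 - A x1) + (g2 - A x2) \<bullet> (A x1 - A x2) \<le> 0"
    using i1 i2 by (simp add: algebra_simps)
  moreover have "(g1 - A x1) \<bullet> (A x2 - A x1) + (g2 - A x2) \<bullet> (A x1 - A x2)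
      = (A x1 - A x2) \<bullet> (A x1 - A x2) - (g1 - g2) \<bullet> (A x1 - A x2)"
    by (simp add: inner_diff_left inner_diff_right inner_commute algebra_simps)
  ultimately have "(A x1 - A x2) \<bullet> (A x1 - A x2) \<le> (g1 - g2) \<bullet> (A x1 - A x2)" by simp
  then show "norm ((g1 - g2) - (A x1 - A x2)) \<le> norm (g1 - g2)" "norm (A x1 - A x2) \<le> norm (g1 - g2)"
    using firm_aux by blast+
qed

lemma diff_alpha:
  fixes A :: "'a::real_vector \<Rightarrow> 'b::real_inner"
  assumes pc: "proper_convex R" and lin: "linear A" and al: "0 < \<alpha>" and be: "0 < \<beta>"
    and xa: "xa \<in> Rmin A R \<alpha> g" and xb: "xb \<in> Rmin A R \<beta> (A xa)"
  shows "norm (A xa - A xb) \<le> \<beta> / \<alpha> * norm (g - A xa)"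
proof -
  have da: "xa \<in> domR R" and db: "xb \<in> domR R" using xa xb unfolding Rmin_def by auto
  define d where "d = A xa - A xb"
  define e where "e = g - A xa"
  have i1: "(g - A xa) \<bullet> (A xb - A xa) \<le> \<alpha> * (real_of_ereal (R xb) - real_of_ereal (R xa))"
    by (rule vi[OF pc lin al xa db])
  have i2: "(A xa - A xb) \<bullet> (A xa - A xb) \<le> \<beta> * (real_of_ereal (R xa) - real_of_ereal (R xb))"
    by (rule vi[OF pc lin be xb da])
  have i1': "real_of_ereal (R xa) - real_of_ereal (R xb) \<le> (e \<bullet> d) / \<alpha>"
  proof -
    have "- (e \<bullet> d) \<le> \<alpha> * (real_of_ereal (R xb) - real_of_ereal (R xa))"
      using i1 unfolding e_def d_def by (simp add: inner_diff_right)
    then show ?thesis using al by (simp add: field_simps)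
  qed
  have "d \<bullet> d \<le> \<beta> * ((e \<bullet> d) / \<alpha>)"
    using i2 i1' be unfolding d_def[symmetric] by (meson mult_left_mono order_trans less_imp_le)
  also have "\<dots> \<le> \<beta> * (norm e * norm d / \<alpha>)"
    using be al norm_cauchy_schwarz[of e d]
    by (intro mult_left_mono divide_right_mono) auto
  finally have "norm d * norm d \<le> (\<beta> / \<alpha> * norm e) * norm d"
    by (simp add: power2_norm_eq_inner[symmetric] power2_eq_square field_simps)
  then have "norm d \<le> \<beta> / \<alpha> * norm e"
    by (rule le_of_mul) (use al be in auto)
  then show ?thesis unfolding d_def e_def .
qed

lemma delta_bound:
  fixes \<nu> \<rho> c \<alpha> \<delta> :: real
  assumes "0 < \<nu>" "0 < \<rho>" "0 < c" "0 < \<alpha>" "0 < \<delta>"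
    and H: "c * \<rho> powr (-1/\<nu>) * \<delta> powr (1/\<nu>) \<le> \<alpha>"
  shows "\<delta> \<le> c powr (-\<nu>) * \<rho> * \<alpha> powr \<nu>"
proof -
  have "(c * \<rho> powr (-1/\<nu>) * \<delta> powr (1/\<nu>)) powr \<nu> \<le> \<alpha> powr \<nu>"
    using assms by (intro powr_mono2) auto
  moreover have "(c * \<rho> powr (-1/\<nu>) * \<delta> powr (1/\<nu>)) powr \<nu> = c powr \<nu> * \<rho> powr (-1) * \<delta>"
  proof -
    have "(c * \<rho> powr (-1/\<nu>) * \<delta> powr (1/\<nu>)) powr \<nu>
        = c powr \<nu> * (\<rho> powr (-1/\<nu>)) powr \<nu> * (\<delta> powr (1/\<nu>)) powr \<nu>"
      by (simp add: powr_mult)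
    also have "\<dots> = c powr \<nu> * \<rho> powr (-1) * \<delta> powr 1"
      using assms(1) by (simp add: powr_powr)
    finally show ?thesis using assms(5) by simp
  qed
  ultimately have "c powr \<nu> * \<rho> powr (-1) * \<delta> \<le> \<alpha> powr \<nu>" by simp
  then have "c powr \<nu> * \<delta> / \<rho> \<le> \<alpha> powr \<nu>" using assms(2) by (simp add: powr_minus field_simps)
  then have "c powr \<nu> * \<delta> \<le> \<rho> * \<alpha> powr \<nu>" using assms(2) by (simp add: field_simps)
  then have "\<delta> \<le> \<rho> * \<alpha> powr \<nu> / c powr \<nu>" using assms(3) by (simp add: field_simps)
  then show ?thesis by (simp add: powr_minus field_simps)
qed

lemma ratio_bound:
  fixes \<nu> \<alpha> \<beta> :: real
  assumes "0 < \<nu>" "\<nu> \<le> 1" "0 < \<beta>" "\<beta> \<le> \<alpha>"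
  shows "\<beta> * \<alpha> powr \<nu> \<le> \<alpha> * \<beta> powr \<nu>"
proof -
  have "\<beta> powr (1 - \<nu>) \<le> \<alpha> powr (1 - \<nu>)" using assms by (intro powr_mono2) auto
  then have "\<beta> / \<beta> powr \<nu> \<le> \<alpha> / \<alpha> powr \<nu>" using assms by (simp add: powr_diff)
  then show ?thesis using assms by (simp add: field_simps)
qed

theorem proposition3p11:
  fixes \<tau> :: "'a::banach topology"
    and R :: "'a \<Rightarrow> ereal"
    and A :: "'a \<Rightarrow> 'b::{real_inner, complete_space}"
    and \<nu> \<rho> c\<^sub>l \<alpha> \<delta> :: real
    and x xhat :: 'a
    and g\<delta> :: 'b
  assumes "locally_convex_hausdorff \<tau>"
    and "proper_convex R"
    and "\<forall>c::real. compactin \<tau> {z. R z \<le> ereal c}"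
    and "linear A"
    and "continuous_map \<tau> weak_topology A"
    and "0 < \<nu>" "\<nu> \<le> 1" "0 < \<rho>" "0 < c\<^sub>l" "0 < \<alpha>" "0 < \<delta>"
    and "x \<in> Kset A R \<nu> \<rho>"
    and "norm (g\<delta> - A x) \<le> \<delta>"
    and "xhat \<in> Rmin A R \<alpha> g\<delta>"
    and "c\<^sub>l * \<rho> powr (-1/\<nu>) * \<delta> powr (1/\<nu>) \<le> \<alpha>"
  shows "varrho A R \<nu> xhat \<le> ereal ((2 + c\<^sub>l powr (-\<nu>)) * \<rho>)"
proof -
  note lch = assms(1) and pc = assms(2) and comp = assms(3) and lin = assms(4) and cont = assms(5)
  note nu0 = assms(6) and nu1 = assms(7) and rho0 = assms(8) and c0 = assms(9) and al = assms(10) and de0 = assms(11)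
  note xK = assms(12) and gd = assms(13) and xh = assms(14) and H = assms(15)
  have Haus: "Hausdorff_space \<tau>" and top: "topspace \<tau> = UNIV"
    using lch unfolding locally_convex_hausdorff_def by auto
  define k where "k = c\<^sub>l powr (-\<nu>)"
  have k0: "0 \<le> k" unfolding k_def by simp
  define Aa where "Aa = \<alpha> powr \<nu>"
  have Aa0: "0 < Aa" unfolding Aa_def using al by simp
  define P where "P = \<rho> * Aa"
  have dB: "\<delta> \<le> k * \<rho> * Aa" unfolding k_def Aa_def
    by (rule delta_bound[OF nu0 rho0 c0 al de0 H])
  have Kb: "norm (A x - A xb) \<le> \<rho> * \<beta> powr \<nu>" if "0 < \<beta>" "xb \<in> Rmin A R \<beta> (A x)" for \<beta> xb
  proof -
    have "ereal (\<beta> powr (-\<nu>) * norm (A x - A xb))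
        \<in> {ereal (\<alpha> powr (-\<nu>) * norm (A x - A xa)) | \<alpha> xa. \<alpha> > 0 \<and> xa \<in> Rmin A R \<alpha> (A x)}"
      using that by blast
    then have "ereal (\<beta> powr (-\<nu>) * norm (A x - A xb)) \<le> varrho A R \<nu> x"
      unfolding varrho_def by (rule Sup_upper)
    also have "\<dots> \<le> ereal \<rho>" using xK unfolding Kset_def by simp
    finally have "norm (A x - A xb) / \<beta> powr \<nu> \<le> \<rho>" by (simp add: powr_minus field_simps)
    then show ?thesis using that(1) by (simp add: field_simps)
  qed
  obtain xa where xa: "xa \<in> Rmin A R \<alpha> (A x)"
    using exists_min[OF Haus top comp cont al pc] by blast
  have xaB: "norm (A x - A xa) \<le> P" unfolding P_def Aa_def using Kb[OF al xa] .
  have f1: "norm ((g\<delta> - A x) - (A xhat - A xa)) \<le> \<delta>"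
    using firm(1)[OF pc lin al xh xa] gd by linarith
  have f2: "norm (A xhat - A xa) \<le> \<delta>"
    using firm(2)[OF pc lin al xh xa] gd by linarith
  have eB: "norm (g\<delta> - A xhat) \<le> \<delta> + P"
  proof -
    have "g\<delta> - A xhat = ((g\<delta> - A x) - (A xhat - A xa)) + (A x - A xa)" by (simp add: algebra_simps)
    then have "norm (g\<delta> - A xhat) \<le> norm ((g\<delta> - A x) - (A xhat - A xa)) + norm (A x - A xa)"
      by (metis norm_triangle_ineq)
    then show ?thesis using f1 xaB by linarith
  qed
  have hB: "norm (A xhat - A x) \<le> \<delta> + P"
  proof -
    have "A xhat - A x = (A xhat - A xa) + (A xa - A x)" by (simp add: algebra_simps)
    then have "norm (A xhat - A x) \<le> norm (A xhat - A xa) + norm (A xa - A x)"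
      by (metis norm_triangle_ineq)
    then show ?thesis using f2 xaB by (simp add: norm_minus_commute)
  qed
  have dP: "\<delta> + P \<le> (k + 1) * \<rho> * Aa" using dB unfolding P_def by (simp add: algebra_simps)
  have main: "\<beta> powr (-\<nu>) * norm (A xhat - A xb) \<le> (2 + k) * \<rho>"
    if be: "0 < \<beta>" and xb: "xb \<in> Rmin A R \<beta> (A xhat)" for \<beta> xb
  proof -
    define Bb where "Bb = \<beta> powr \<nu>"
    have Bb0: "0 < Bb" unfolding Bb_def using be by simp
    have dn: "norm (A xhat - A xb) \<le> (2 + k) * \<rho> * Bb"
    proof (cases "\<beta> \<le> \<alpha>")
      case True
      have "norm (A xhat - A xb) \<le> \<beta> / \<alpha> * norm (g\<delta> - A xhat)"
        by (rule diff_alpha[OF pc lin al be xh xb])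
      also have "\<dots> \<le> \<beta> / \<alpha> * ((k + 1) * \<rho> * Aa)"
        using eB dP be al by (intro mult_left_mono) auto
      also have "\<dots> = (k + 1) * \<rho> * ((\<beta> * Aa) / \<alpha>)" by (simp add: field_simps)
      also have "\<dots> \<le> (k + 1) * \<rho> * Bb"
      proof -
        have "\<beta> * Aa \<le> \<alpha> * Bb" unfolding Aa_def Bb_def by (rule ratio_bound[OF nu0 nu1 be True])
        then have "(\<beta> * Aa) / \<alpha> \<le> Bb" using al by (simp add: field_simps)
        then show ?thesis using k0 rho0 by (intro mult_left_mono) auto
      qed
      also have "\<dots> \<le> (2 + k) * \<rho> * Bb" using rho0 Bb0 by (intro mult_right_mono) auto
      finally show ?thesis .
    next
      case False
      then have ab: "Aa \<le> Bb" unfolding Aa_def Bb_def using al nu0 by (intro powr_mono2) auto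
      obtain xb' where xb': "xb' \<in> Rmin A R \<beta> (A x)"
        using exists_min[OF Haus top comp cont be pc] by blast
      have g1: "norm ((A xhat - A x) - (A xb - A xb')) \<le> \<delta> + P"
        using firm(1)[OF pc lin be xb xb'] hB by linarith
      have g2: "norm (A x - A xb') \<le> \<rho> * Bb" unfolding Bb_def by (rule Kb[OF be xb'])
      have "A xhat - A xb = ((A xhat - A x) - (A xb - A xb')) + (A x - A xb')" by (simp add: algebra_simps)
      then have "norm (A xhat - A xb) \<le> norm ((A xhat - A x) - (A xb - A xb')) + norm (A x - A xb')"
        by (metis norm_triangle_ineq)
      also have "\<dots> \<le> (k + 1) * \<rho> * Aa + \<rho> * Bb" using g1 g2 dP by linarith
      also have "\<dots> \<le> (k + 1) * \<rho> * Bb + \<rho> * Bb"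
        using ab k0 rho0 by (simp add: mult_left_mono)
      also have "\<dots> = (2 + k) * \<rho> * Bb" by (simp add: algebra_simps)
      finally show ?thesis .
    qed
    have "\<beta> powr (-\<nu>) * norm (A xhat - A xb) = norm (A xhat - A xb) / Bb"
      unfolding Bb_def by (simp add: powr_minus field_simps)
    also have "\<dots> \<le> (2 + k) * \<rho>" using dn Bb0 by (simp add: field_simps)
    finally show ?thesis .
  qed
  show ?thesis
    unfolding varrho_def k_def[symmetric]
  proof (rule Sup_least)
    fix y assume "y \<in> {ereal (\<alpha> powr (-\<nu>) * norm (A xhat - A xa)) | \<alpha> xa. \<alpha> > 0 \<and> xa \<in> Rmin A R \<alpha> (A xhat)}"
    then obtain \<beta> xb where "y = ereal (\<beta> powr (-\<nu>) * norm (A xhat - A xb))" "0 < \<beta>" "xb \<in> Rmin A R \<beta> (A xhat)"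
      by blast
    then show "y \<le> ereal ((2 + k) * \<rho>)" using main by simp
  qed
qed

end
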